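(* Consider a qubit dynamics $\{\Lambda_t\}_{t\ge0}$ (Pauli dynamical map) whose states $\rho(t)=\Lambda_t[\rho(0)]$ satisfy the time-local master equation $$\frac{\mathrm{d}}{\mathrm{d}t}\rho(t)=\frac12\sum_{k=1}^3\gamma_k(t)\big(\sigma_k\rho(t)\sigma_k-\rho(t)\big)$$ with real rates $\gamma_k(t)$, and suppose it also satisfies $\frac{\mathrm{d}}{\mathrm{d}t}\Lambda_t=\int_0^t\mathrm{d}\tau\,\mathcal{K}^{\mathrm{NZ}}_{t-\tau}\Lambda_\tau$ for a memory kernel $\mathcal{K}^{\mathrm{NZ}}_t$. The time-local generator has eigenvalues $m^{\mathrm{TCL}}_k(t)=-(\gamma_i(t)+\gamma_j(t))$ for $\{i,j,k\}=\{1,2,3\}$ (on the eigenvectors $\sigma_k$) and $0$ (on $\mathds{1}$); let $G_\alpha(t)=\frac{\mathrm{d}}{\mathrm{d}t}\exp\!\left(\int_0^t m^{\mathrm{TCL}}_\alpha(\tau)\mathrm{d}\tau\right)$ and assume $|\widetilde{G_\alpha}(u)|<1$ for all $\alpha$. Let $\{\Lambda^{\mathrm{Red}}_t\}$ be the solution of $\frac{\mathrm{d}}{\mathrm{d}t}\Lambda^{\mathrm{Red}}_t=\mathcal{K}^{\mathrm{Red}}_t\Lambda^{\mathrm{Red}}_t$, $\Lambda^{\mathrm{Red}}_0=\mathds{1}$, with $\mathcal{K}^{\mathrm{Red}}_t=\int_0^t\mathrm{d}\tau\,\mathcal{K}^{\mathrm{NZ}}_\tau$. If $\{\Lambda_t\}$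 is P-divisible, then $\{\Lambda^{\mathrm{Red}}_t\}$ is also P-divisible.
   Context: $\sigma_1,\sigma_2,\sigma_3$ are the Pauli matrices. A family of maps $\{\Lambda_t\}_{t\ge0}$ is P-divisible if for all $t\ge s\ge0$ one can write $\Lambda_t=V_{t,s}\Lambda_s$ with $V_{t,s}$ a positive trace-preserving map. $\widetilde{G_\alpha}(u)$ is the Laplace transform of $G_\alpha$. *)

theory Defs
  imports "HOL-Analysis.Analysis"
begin

type_synonym qop = "complex^2^2"
type_synonym qmap = "qop \<Rightarrow> qop"

definition pauli :: "nat \<Rightarrow> qop" where
  "pauli k = (if k = 1 then (\<chi> i j. if i = j then 0 else 1)
     else if k = 2 then (\<chi> i j. if i = j then 0 else if i = 0 then - \<i> else \<i>)
     else if k = 3 then (\<chi> i j. if i = j then (if i = 0 then 1 else -1) else 0)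
     else mat 1)"

definition cscale :: "complex \<Rightarrow> qop \<Rightarrow> qop" where
  "cscale c A = (\<chi> i j. c * A $ i $ j)"

definition qtrace :: "qop \<Rightarrow> complex" where
  "qtrace A = (\<Sum>i\<in>UNIV. A $ i $ i)"

definition qform :: "qop \<Rightarrow> complex^2 \<Rightarrow> complex" where
  "qform A x = (\<Sum>i\<in>UNIV. \<Sum>j\<in>UNIV. cnj (x $ i) * A $ i $ j * x $ j)"

definition psd :: "qop \<Rightarrow> bool" where
  "psd A \<longleftrightarrow> (\<forall>x. qform A x \<in> \<real> \<and> 0 \<le> Re (qform A x))"

definition qlinear :: "qmap \<Rightarrow> bool" where
  "qlinear V \<longleftrightarrow> (\<forall>A B. V (A + B) = V A + V B) \<and> (\<forall>c A. V (cscale c A) = cscale c (V A))"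

definition positive_map :: "qmap \<Rightarrow> bool" where
  "positive_map V \<longleftrightarrow> (\<forall>A. psd A \<longrightarrow> psd (V A))"

definition trace_preserving :: "qmap \<Rightarrow> bool" where
  "trace_preserving V \<longleftrightarrow> (\<forall>A. qtrace (V A) = qtrace A)"

definition P_divisible :: "(real \<Rightarrow> qmap) \<Rightarrow> bool" where
  "P_divisible \<Lambda> \<longleftrightarrow> (\<forall>t s. 0 \<le> s \<and> s \<le> t \<longrightarrow>
      (\<exists>V. qlinear V \<and> positive_map V \<and> trace_preserving V \<and> \<Lambda> t = V \<circ> \<Lambda> s))"

definition LTCL :: "(nat \<Rightarrow> real \<Rightarrow> real) \<Rightarrow> real \<Rightarrow> qmap" where
  "LTCL \<gamma> t \<rho> = (\<Sum>k\<in>{1,2,3}. (\<gamma> k t / 2) *\<^sub>R (pauli k ** \<rho> ** pauli k - \<rho>))"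

text \<open>Eigenvalues of the TCL generator: index 0 for the identity, k for \<open>\<sigma>_k\<close>.\<close>
definition mTCL :: "(nat \<Rightarrow> real \<Rightarrow> real) \<Rightarrow> nat \<Rightarrow> real \<Rightarrow> real" where
  "mTCL \<gamma> \<alpha> t = (if \<alpha> = 1 then - (\<gamma> 2 t + \<gamma> 3 t)
      else if \<alpha> = 2 then - (\<gamma> 1 t + \<gamma> 3 t)
      else if \<alpha> = 3 then - (\<gamma> 1 t + \<gamma> 2 t) else 0)"

definition Gfun :: "(nat \<Rightarrow> real \<Rightarrow> real) \<Rightarrow> nat \<Rightarrow> real \<Rightarrow> real" where
  "Gfun \<gamma> \<alpha> t = deriv (\<lambda>s. exp (integral {0..s} (mTCL \<gamma> \<alpha>))) t"

definition laplace :: "(real \<Rightarrow> real) \<Rightarrow> real \<Rightarrow> real" where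
  "laplace f u = integral {0..} (\<lambda>t. exp (- u * t) * f t)"

definition KRed :: "(real \<Rightarrow> qmap) \<Rightarrow> real \<Rightarrow> qmap" where
  "KRed K t \<rho> = integral {0..t} (\<lambda>\<tau>. K \<tau> \<rho>)"

end

theory Submission
  imports Defs
begin



lemma sum2: "sum f (UNIV::2 set) = f 0 + f 1"
proof -
  have h: "(2::2) = 0" by simp
  show ?thesis by (simp only: sum_2 h) (rule add.commute)
qed

lemma forall2: "(\<forall>i::2. P i) \<longleftrightarrow> P 0 \<and> P 1"
  by (metis exhaust_2 zero_neq_numeral num1_eq_iff one_neq_zero) 

definition crd :: "nat \<Rightarrow> qop \<Rightarrow> complex" where
 "crd b A = (if b = 0 then (A$0$0 + A$1$1)/2 else if b = 1 then (A$0$1 + A$1$0)/2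
    else if b = 2 then \<i>*(A$0$1 - A$1$0)/2 else if b = 3 then (A$0$0 - A$1$1)/2 else 0)"

definition mkop :: "(nat \<Rightarrow> complex) \<Rightarrow> qop" where
 "mkop a = (\<chi> i j. if i = 0 then (if j = 0 then a 0 + a 3 else a 1 - \<i> * a 2)
                    else (if j = 0 then a 1 + \<i> * a 2 else a 0 - a 3))"

lemma qop_eq: "(A::qop) = B \<longleftrightarrow> A$0$0 = B$0$0 \<and> A$0$1 = B$0$1 \<and> A$1$0 = B$1$0 \<and> A$1$1 = B$1$1"
  by (auto simp: vec_eq_iff forall2)

lemma mkop_crd: "mkop (\<lambda>b. crd b A) = A"
  by (simp add: qop_eq mkop_def crd_def field_simps)

lemma crd_mkop: "b \<le> 3 \<Longrightarrow> crd b (mkop a) = a b"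
  by (auto simp: mkop_def crd_def field_simps eval_nat_numeral le_Suc_eq)

lemma crd_add: "crd b (A + B) = crd b A + crd b B"
  by (simp add: crd_def field_simps)
lemma crd_diff: "crd b (A - B) = crd b A - crd b B"
  by (simp add: crd_def field_simps)
lemma crd_scaleR: "crd b (r *\<^sub>R A) = of_real r * crd b A"
  unfolding crd_def by (simp add: vector_scaleR_component) (simp add: scaleR_conv_of_real field_simps)
lemma crd_cscale: "crd b (cscale z A) = z * crd b A"
  by (simp add: crd_def field_simps cscale_def)
lemma crd_zero: "crd b 0 = 0"
  by (simp add: crd_def)

lemma linear_crd: "linear (crd b)"
proof -
  have e: "\<And>r (z::complex). r *\<^sub>R z = of_real r * z" by (simp add: scaleR_conv_of_real)
  show ?thesis by (rule linearI) (simp_all add: crd_add crd_scaleR e)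
qed

lemma bounded_linear_crd: "bounded_linear (crd b)"
  using linear_crd linear_conv_bounded_linear by blast

lemma crd_pauli: "b \<le> 3 \<Longrightarrow> a \<le> 3 \<Longrightarrow> crd b (pauli a) = (if b = a then 1 else 0)"
  by (auto simp: crd_def pauli_def eval_nat_numeral le_Suc_eq mat_def)

lemma crd_conj: "k \<in> {1,2,3} \<Longrightarrow> b \<le> 3 \<Longrightarrow>
   crd b (pauli k ** A ** pauli k) = (if b = 0 \<or> b = k then 1 else -1) * crd b A"
  by (auto simp: crd_def pauli_def eval_nat_numeral le_Suc_eq matrix_matrix_mult_def sum2 field_simps)

lemma crd_LTCL: "b \<le> 3 \<Longrightarrow> crd b (LTCL \<gamma> t A) = of_real (mTCL \<gamma> b t) * crd b A"
  by (auto simp: LTCL_def crd_add crd_diff crd_scaleR crd_conj mTCL_def eval_nat_numeral le_Suc_eq field_simps)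



lemma deriv_zero_crit:
  fixes E :: "real \<Rightarrow> real"
  assumes "\<And>e. e > 0 \<Longrightarrow> \<exists>d>0. \<forall>y\<in>S. y \<noteq> x \<and> \<bar>y - x\<bar> < d \<longrightarrow> \<bar>E y - E x\<bar> \<le> e * \<bar>y - x\<bar>"
  shows "(E has_real_derivative 0) (at x within S)"
  unfolding has_field_derivative_iff
proof (rule tendstoI)
  fix e :: real assume e: "e > 0"
  obtain d where d: "d > 0" and hd: "\<forall>y\<in>S. y \<noteq> x \<and> \<bar>y - x\<bar> < d \<longrightarrow> \<bar>E y - E x\<bar> \<le> (e/2) * \<bar>y - x\<bar>"
    using assms[of "e/2"] e by auto
  show "\<forall>\<^sub>F y in at x within S. dist ((E y - E x) / (y - x)) 0 < e"
    unfolding eventually_at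
  proof (intro exI[of _ d] conjI ballI impI)
    show "d > 0" by fact
    fix y assume y: "y \<in> S" "y \<noteq> x \<and> dist y x < d"
    then have "\<bar>E y - E x\<bar> \<le> (e/2) * \<bar>y - x\<bar>" using hd by (auto simp: dist_real_def)
    moreover have "\<bar>y - x\<bar> > 0" using y by (auto simp: dist_real_def)
    ultimately have "\<bar>E y - E x\<bar> / \<bar>y - x\<bar> \<le> e/2" by (simp add: divide_le_eq)
    moreover have "dist ((E y - E x) / (y - x)) 0 = \<bar>E y - E x\<bar> / \<bar>y - x\<bar>" by (simp add: abs_divide dist_real_def)
    ultimately show "dist ((E y - E x) / (y - x)) 0 < e" using e by linarith
  qed
qed

lemma ibp:
  fixes k h h' :: "real \<Rightarrow> real"
  assumes k: "k integrable_on {0..t}" and t: "0 \<le> t"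
    and mono: "\<And>x y. 0 \<le> x \<Longrightarrow> x \<le> y \<Longrightarrow> y \<le> t \<Longrightarrow> h x \<le> h y"
    and dh: "\<And>x. x \<in> {0..t} \<Longrightarrow> (h has_real_derivative h' x) (at x within {0..t})"
    and ch: "continuous_on {0..t} h'"
  shows "(\<lambda>s. h s * k s) integrable_on {0..t} \<and>
     integral {0..t} (\<lambda>s. h s * k s) = h t * integral {0..t} k - integral {0..t} (\<lambda>s. h' s * integral {0..s} k)"
proof -
  define \<Phi> where "\<Phi> x = integral {0..x} k" for x
  have cPhi: "continuous_on {0..t} \<Phi>" unfolding \<Phi>_def using indefinite_integral_continuous_1[OF k] .
  have ksub: "k integrable_on {a..b}" if "0 \<le> a" "b \<le> t" for a b
    using integrable_subinterval_real[OF k] that by auto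
  have hkint: "(\<lambda>s. h s * k s) integrable_on {a..b}" if hab: "0 \<le> a" "a \<le> b" "b \<le> t" for a b
  proof -
    have m: "\<And>x y. a \<le> x \<Longrightarrow> x \<le> y \<Longrightarrow> y \<le> b \<Longrightarrow> h x \<le> h y" using mono hab by auto
    obtain c where "c \<in> {a..b}" "((\<lambda>x. h x * k x) has_integral (h a * integral {a..c} k + h b * integral {c..b} k)) {a..b}"
      using second_mean_value_theorem_full[where g=h, OF ksub[OF hab(1) hab(3)] \<open>a \<le> b\<close> m] by blast
    then show ?thesis by blast
  qed
  have hcont: "continuous_on {0..t} h"
    using dh by (meson DERIV_continuous continuous_at_imp_continuous_on continuous_on_eq_continuous_within)
  have cprod: "continuous_on {0..t} (\<lambda>s. h' s * \<Phi> s)"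
    by (intro continuous_intros ch cPhi)
  define P where "P x = integral {0..x} (\<lambda>s. h s * k s)" for x
  define Q where "Q x = integral {0..x} (\<lambda>s. h' s * \<Phi> s)" for x
  define E where "E x = P x - h x * \<Phi> x + Q x" for x
  obtain B where B: "B > 0" "\<And>x. x \<in> {0..t} \<Longrightarrow> \<bar>h' x\<bar> \<le> B"
    using compact_imp_bounded[OF compact_continuous_image[OF ch compact_Icc]]
    unfolding bounded_pos by auto
  have key: "\<exists>c\<in>{a..b}. E b - E a = integral {a..b} (\<lambda>s. h' s * (\<Phi> s - \<Phi> c))"
    if ab: "0 \<le> a" "a \<le> b" "b \<le> t" for a b
  proof -
    obtain c where c: "c \<in> {a..b}" and ic: "integral {a..b} (\<lambda>x. h x * k x) = h a * integral {a..c} k + h b * integral {c..b} k"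
    proof -
      have m: "\<And>x y. a \<le> x \<Longrightarrow> x \<le> y \<Longrightarrow> y \<le> b \<Longrightarrow> h x \<le> h y" using mono ab by auto
      show thesis using second_mean_value_theorem[where g=h, OF ksub[OF ab(1) ab(3)] \<open>a \<le> b\<close> m] that by blast
    qed
    have "integral {0..a} k + integral {a..c} k = integral {0..c} k"
      using c ab by (intro Henstock_Kurzweil_Integration.integral_combine ksub) auto
    then have i1: "integral {a..c} k = \<Phi> c - \<Phi> a" unfolding \<Phi>_def by simp
    have "integral {0..c} k + integral {c..b} k = integral {0..b} k"
      using c ab by (intro Henstock_Kurzweil_Integration.integral_combine ksub) auto
    then have i2: "integral {c..b} k = \<Phi> b - \<Phi> c" unfolding \<Phi>_def by simp
    have "integral {0..a} (\<lambda>s. h s * k s) + integral {a..b} (\<lambda>s. h s * k s) = integral {0..b} (\<lambda>s. h s * k s)"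
      using ab by (intro Henstock_Kurzweil_Integration.integral_combine hkint) auto
    then have iP: "P b - P a = integral {a..b} (\<lambda>s. h s * k s)" unfolding P_def by simp
    have cprod': "continuous_on {0..b} (\<lambda>s. h' s * \<Phi> s)"
      using cprod ab by (auto intro: continuous_on_subset)
    have "integral {0..a} (\<lambda>s. h' s * \<Phi> s) + integral {a..b} (\<lambda>s. h' s * \<Phi> s) = integral {0..b} (\<lambda>s. h' s * \<Phi> s)"
      using ab by (intro Henstock_Kurzweil_Integration.integral_combine integrable_continuous_real cprod') auto
    then have iQ: "Q b - Q a = integral {a..b} (\<lambda>s. h' s * \<Phi> s)" unfolding Q_def by simp
    have "(h' has_integral (h b - h a)) {a..b}"
    proof (rule fundamental_theorem_of_calculus[OF \<open>a \<le> b\<close>])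
      fix x assume x: "x \<in> {a..b}"
      then have "(h has_real_derivative h' x) (at x within {0..t})" using dh ab by auto
      then have "(h has_real_derivative h' x) (at x within {a..b})"
        by (rule DERIV_subset) (use ab in auto)
      then show "(h has_vector_derivative h' x) (at x within {a..b})"
        by (simp add: has_real_derivative_iff_has_vector_derivative)
    qed
    then have ih: "integral {a..b} h' = h b - h a" by (simp add: integral_unique)
    have ch': "continuous_on {a..b} h'" using ch ab by (auto intro: continuous_on_subset)
    have cP': "continuous_on {a..b} \<Phi>" using cPhi ab by (auto intro: continuous_on_subset)
    have "integral {a..b} (\<lambda>s. h' s * (\<Phi> s - \<Phi> c)) = integral {a..b} (\<lambda>s. h' s * \<Phi> s - h' s * \<Phi> c)"
      by (simp add: algebra_simps)
    also have "\<dots> = integral {a..b} (\<lambda>s. h' s * \<Phi> s) - integral {a..b} (\<lambda>s. h' s * \<Phi> c)"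
      by (intro integral_diff integrable_continuous_real continuous_intros ch' cP')
    also have "integral {a..b} (\<lambda>s. h' s * \<Phi> c) = (h b - h a) * \<Phi> c"
      using ih by simp
    finally have "integral {a..b} (\<lambda>s. h' s * (\<Phi> s - \<Phi> c)) = integral {a..b} (\<lambda>s. h' s * \<Phi> s) - (h b - h a) * \<Phi> c" .
    moreover have "E b - E a = (P b - P a) - h b * \<Phi> b + h a * \<Phi> a + (Q b - Q a)"
      unfolding E_def by simp
    ultimately have "E b - E a = integral {a..b} (\<lambda>s. h' s * (\<Phi> s - \<Phi> c))"
      using iP iQ ic i1 i2 by (simp add: algebra_simps)
    then show ?thesis using c by blast
  qed
  have bnd: "\<bar>E b - E a\<bar> \<le> B * \<epsilon> * (b - a)"
    if ab: "0 \<le> a" "a \<le> b" "b \<le> t" and close: "\<And>s. s \<in> {a..b} \<Longrightarrow> \<bar>\<Phi> s - \<Phi> x\<bar> \<le> \<epsilon>/2" for a b \<epsilon> x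
  proof -
    obtain c where c: "c \<in> {a..b}" and eq: "E b - E a = integral {a..b} (\<lambda>s. h' s * (\<Phi> s - \<Phi> c))"
      using key[OF ab] by blast
    have ch': "continuous_on {a..b} h'" using ch ab by (auto intro: continuous_on_subset)
    have cP': "continuous_on {a..b} \<Phi>" using cPhi ab by (auto intro: continuous_on_subset)
    have "norm (integral {a..b} (\<lambda>s. h' s * (\<Phi> s - \<Phi> c))) \<le> integral {a..b} (\<lambda>s. B * \<epsilon>)"
    proof (rule integral_norm_bound_integral)
      show "(\<lambda>s. h' s * (\<Phi> s - \<Phi> c)) integrable_on {a..b}"
        by (intro integrable_continuous_real continuous_intros ch' cP')
      show "(\<lambda>s. B * \<epsilon>) integrable_on {a..b}" by (rule integrable_const_ivl)
      fix s assume s: "s \<in> {a..b}"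
      have "\<bar>\<Phi> s - \<Phi> c\<bar> \<le> \<epsilon>" using close[OF s] close[OF c] by linarith
      moreover have "\<bar>h' s\<bar> \<le> B" using B(2)[of s] s ab by auto
      ultimately show "norm (h' s * (\<Phi> s - \<Phi> c)) \<le> B * \<epsilon>"
        by (simp add: abs_mult mult_mono')
    qed
    then show ?thesis using eq ab by (simp add: mult.commute mult.left_commute)
  qed
  have dE: "(E has_real_derivative 0) (at x within {0..t})" if x: "x \<in> {0..t}" for x
  proof (rule deriv_zero_crit)
    fix e :: real assume e: "e > 0"
    obtain d where d: "d > 0" and hd: "\<forall>y\<in>{0..t}. dist y x < d \<longrightarrow> dist (\<Phi> y) (\<Phi> x) < e / B / 2"
      using cPhi x e B(1) unfolding continuous_on_iff by (metis divide_pos_pos zero_less_numeral)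
    show "\<exists>d>0. \<forall>y\<in>{0..t}. y \<noteq> x \<and> \<bar>y - x\<bar> < d \<longrightarrow> \<bar>E y - E x\<bar> \<le> e * \<bar>y - x\<bar>"
    proof (intro exI[of _ d] conjI ballI impI d)
      fix y assume y: "y \<in> {0..t}" "y \<noteq> x \<and> \<bar>y - x\<bar> < d"
      have Be: "B * (e / B) = e" using B(1) by simp
      show "\<bar>E y - E x\<bar> \<le> e * \<bar>y - x\<bar>"
      proof (cases "x \<le> y")
        case True
        have cl: "\<bar>\<Phi> s - \<Phi> x\<bar> \<le> (e / B) / 2" if s: "s \<in> {x..y}" for s
        proof -
          have "s \<in> {0..t}" "dist s x < d" using s x y True by (auto simp: dist_real_def)
          then have "dist (\<Phi> s) (\<Phi> x) < e / B / 2" using hd by blast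
          then show ?thesis by (simp add: dist_real_def)
        qed
        have "\<bar>E y - E x\<bar> \<le> B * (e / B) * (y - x)"
          using x y True by (intro bnd[where x=x] cl) auto
        then show ?thesis using True Be by simp
      next
        case False
        have cl: "\<bar>\<Phi> s - \<Phi> x\<bar> \<le> (e / B) / 2" if s: "s \<in> {y..x}" for s
        proof -
          have "s \<in> {0..t}" "dist s x < d" using s x y False by (auto simp: dist_real_def)
          then have "dist (\<Phi> s) (\<Phi> x) < e / B / 2" using hd by blast
          then show ?thesis by (simp add: dist_real_def)
        qed
        have "\<bar>E x - E y\<bar> \<le> B * (e / B) * (x - y)"
          using x y False by (intro bnd[where x=x] cl) auto
        then show ?thesis using False Be by simp
      qed
    qed
  qed
  obtain C where C: "\<forall>x\<in>{0..t}. E x = C"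
    using has_field_derivative_zero_constant[of "{0..t}" E] dE by auto
  have "E 0 = 0" unfolding E_def P_def Q_def \<Phi>_def by simp
  then have "E t = 0" using C t by auto
  then show ?thesis using hkint[of 0 t] t unfolding E_def P_def Q_def \<Phi>_def by simp
qed



lemma gronwall0:
  fixes u :: "real \<Rightarrow> real"
  assumes cont: "continuous_on {0..T} u" and nn: "\<And>t. t \<in> {0..T} \<Longrightarrow> 0 \<le> u t"
    and M: "0 \<le> M" and le: "\<And>t. t \<in> {0..T} \<Longrightarrow> u t \<le> M * integral {0..t} u"
    and t: "t \<in> {0..T}"
  shows "u t = 0"
proof -
  define w where "w x = integral {0..x} u" for x
  define z where "z x = w x * exp (- M * x)" for x
  have dw: "(w has_real_derivative u x) (at x within {0..t})" if "x \<in> {0..t}" for x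
  proof -
    have "continuous_on {0..t} u" using cont t by (auto intro: continuous_on_subset)
    then show ?thesis unfolding w_def using integral_has_real_derivative that by blast
  qed
  have dz: "(z has_derivative (*) ((u x - M * w x) * exp (- M * x))) (at x within {0..t})"
    if "x \<in> {0..t}" for x
  proof -
    have "(z has_real_derivative (u x * exp (- M * x) + w x * (exp (- M * x) * (- M)))) (at x within {0..t})"
      unfolding z_def
      by (rule derivative_eq_intros dw that | simp)+
    moreover have "u x * exp (- M * x) + w x * (exp (- M * x) * (- M)) = (u x - M * w x) * exp (- M * x)"
      by (simp add: algebra_simps)
    ultimately show ?thesis by (simp add: has_field_derivative_def)
  qed
  obtain x where x: "x \<in> {0..t}" and eq: "z t - z 0 = ((u x - M * w x) * exp (- M * x)) * t"
    using mvt_very_simple[of 0 t z "\<lambda>x. (*) ((u x - M * w x) * exp (- M * x))"] dz t by auto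
  have "x \<in> {0..T}" using x t by auto
  then have "u x - M * w x \<le> 0" using le[of x] unfolding w_def by simp
  then have "((u x - M * w x) * exp (- M * x)) * t \<le> 0" using t
    by (simp add: mult_nonneg_nonpos mult_nonpos_nonneg)
  moreover have "z 0 = 0" by (simp add: z_def w_def)
  ultimately have "z t \<le> 0" using eq by simp
  moreover have "0 \<le> w t" unfolding w_def
    using t cont nn by (intro integral_nonneg integrable_continuous_real) (auto intro: continuous_on_subset)
  ultimately have "w t = 0" unfolding z_def by (simp add: mult_le_0_iff)
  then have "u t \<le> 0" using le[OF t] unfolding w_def by simp
  then show ?thesis using nn[OF t] by simp
qed


lemma cont_refl:
  fixes G :: "real \<Rightarrow> real"
  assumes "continuous_on {0..T} G" "t \<in> {0..T}"
  shows "continuous_on {0..t} (\<lambda>s. G (t - s))"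
  by (rule continuous_on_compose2[of "{0..T}" G "{0..t}" "\<lambda>s. t - s"])
     (use assms in \<open>auto intro!: continuous_intros\<close>)

lemma volterra_zero:
  fixes \<phi> G :: "real \<Rightarrow> real"
  assumes cphi: "continuous_on {0..T} \<phi>" and cG: "continuous_on {0..T} G"
    and eq: "\<And>t. t \<in> {0..T} \<Longrightarrow> \<phi> t + integral {0..t} (\<lambda>s. G (t - s) * \<phi> s) = 0"
    and t: "t \<in> {0..T}"
  shows "\<phi> t = 0"
proof -
  obtain M where M: "M > 0" "\<And>x. x \<in> {0..T} \<Longrightarrow> \<bar>G x\<bar> \<le> M"
    using compact_imp_bounded[OF compact_continuous_image[OF cG compact_Icc]]
    unfolding bounded_pos by auto
  have "\<bar>\<phi> t\<bar> = 0"
  proof (rule gronwall0[of T "\<lambda>t. \<bar>\<phi> t\<bar>" M])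
    show "continuous_on {0..T} (\<lambda>t. \<bar>\<phi> t\<bar>)" by (intro continuous_intros cphi)
    show "0 \<le> M" using M by simp
    show "t \<in> {0..T}" by fact
    fix x assume x: "x \<in> {0..T}"
    show "0 \<le> \<bar>\<phi> x\<bar>" by simp
    have cphix: "continuous_on {0..x} \<phi>" using cphi x by (auto intro: continuous_on_subset)
    have "\<bar>\<phi> x\<bar> = norm (integral {0..x} (\<lambda>s. G (x - s) * \<phi> s))"
      using eq[OF x] by (simp add: eq_neg_iff_add_eq_0[symmetric])
    also have "\<dots> \<le> integral {0..x} (\<lambda>s. M * \<bar>\<phi> s\<bar>)"
    proof (rule integral_norm_bound_integral)
      show "(\<lambda>s. G (x - s) * \<phi> s) integrable_on {0..x}"
        by (intro integrable_continuous_real continuous_intros cont_refl[OF cG x] cphix)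
      show "(\<lambda>s. M * \<bar>\<phi> s\<bar>) integrable_on {0..x}"
        by (intro integrable_continuous_real continuous_intros cphix)
      fix s assume s: "s \<in> {0..x}"
      then have "\<bar>G (x - s)\<bar> \<le> M" using M(2)[of "x - s"] x by auto
      then show "norm (G (x - s) * \<phi> s) \<le> M * \<bar>\<phi> s\<bar>"
        by (simp add: abs_mult mult_right_mono)
    qed
    also have "\<dots> = M * integral {0..x} (\<lambda>s. \<bar>\<phi> s\<bar>)" by simp
    finally show "\<bar>\<phi> x\<bar> \<le> M * integral {0..x} (\<lambda>s. \<bar>\<phi> s\<bar>)" .
  qed
  then show ?thesis by simp
qed

lemma volterra_sign:
  fixes \<psi> H :: "real \<Rightarrow> real"
  assumes cpsi: "continuous_on {0..T} \<psi>" and cH: "continuous_on {0..T} H"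
    and Hnn: "\<And>t. t \<in> {0..T} \<Longrightarrow> 0 \<le> H t"
    and eq: "\<And>t. t \<in> {0..T} \<Longrightarrow> \<psi> t = H t + integral {0..t} (\<lambda>s. H (t - s) * \<psi> s)"
    and t: "t \<in> {0..T}"
  shows "0 \<le> \<psi> t"
proof -
  obtain M where M: "M > 0" "\<And>x. x \<in> {0..T} \<Longrightarrow> \<bar>H x\<bar> \<le> M"
    using compact_imp_bounded[OF compact_continuous_image[OF cH compact_Icc]]
    unfolding bounded_pos by auto
  define u where "u x = max (- \<psi> x) 0" for x
  have cu: "continuous_on {0..T} u" unfolding u_def by (intro continuous_intros cpsi)
  have "u t = 0"
  proof (rule gronwall0[of T u M])
    show "continuous_on {0..T} u" by fact
    show "0 \<le> M" using M by simp
    show "t \<in> {0..T}" by fact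
    fix x assume x: "x \<in> {0..T}"
    show "0 \<le> u x" by (simp add: u_def)
    have cpsix: "continuous_on {0..x} \<psi>" using cpsi x by (auto intro: continuous_on_subset)
    have cux: "continuous_on {0..x} u" using cu x by (auto intro: continuous_on_subset)
    have i0: "0 \<le> integral {0..x} u"
      by (intro integral_nonneg integrable_continuous_real cux) (simp add: u_def)
    show "u x \<le> M * integral {0..x} u"
    proof (cases "0 \<le> \<psi> x")
      case True
      then have "u x = 0" by (simp add: u_def)
      then show ?thesis using i0 M by simp
    next
      case False
      then have ux: "u x = - \<psi> x" by (simp add: u_def)
      have "- \<psi> x \<le> - integral {0..x} (\<lambda>s. H (x - s) * \<psi> s)"
        using eq[OF x] Hnn[OF x] by simp
      also have "\<dots> = integral {0..x} (\<lambda>s. - (H (x - s) * \<psi> s))"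
        by (simp add: integral_neg)
      also have "\<dots> \<le> integral {0..x} (\<lambda>s. M * u s)"
      proof (rule integral_le)
        show "(\<lambda>s. - (H (x - s) * \<psi> s)) integrable_on {0..x}"
          by (intro integrable_continuous_real continuous_intros cont_refl[OF cH x] cpsix)
        show "(\<lambda>s. M * u s) integrable_on {0..x}"
          by (intro integrable_continuous_real continuous_intros cux)
        fix s assume s: "s \<in> {0..x}"
        then have hs: "0 \<le> H (x - s)" "H (x - s) \<le> M" using M(2)[of "x - s"] Hnn[of "x - s"] x by auto
        have us: "- \<psi> s \<le> u s" "0 \<le> u s" by (auto simp: u_def)
        have "- (H (x - s) * \<psi> s) = H (x - s) * (- \<psi> s)" by simp
        also have "\<dots> \<le> H (x - s) * u s" using hs us using mult_left_mono[OF us(1) hs(1)] by simp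
        also have "\<dots> \<le> M * u s" using hs us by (simp add: mult_right_mono)
        finally show "- (H (x - s) * \<psi> s) \<le> M * u s" .
      qed
      also have "\<dots> = M * integral {0..x} u" by simp
      finally show ?thesis using ux by simp
    qed
  qed
  then show ?thesis by (simp add: u_def)
qed



lemma ode_coord:
  fixes f :: "real \<Rightarrow> qop" and L :: "real \<Rightarrow> qmap" and d :: "real \<Rightarrow> real"
  assumes der: "\<And>t. 0 \<le> t \<Longrightarrow> (f has_vector_derivative L t (f t)) (at t within {0..})"
    and coef: "\<And>t. 0 \<le> t \<Longrightarrow> crd b (L t (f t)) = of_real (d t) * crd b (f t)"
    and cd: "\<And>T. continuous_on {0..T} d"
    and t: "0 \<le> t"
  shows "crd b (f t) = crd b (f 0) * of_real (exp (integral {0..t} d))"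
proof -
  define g where "g x = crd b (f x) * of_real (exp (- integral {0..x} d))" for x
  have dg: "(g has_vector_derivative 0) (at x within {0..t})" if x: "x \<in> {0..t}" for x
  proof -
    have d1: "(f has_vector_derivative L x (f x)) (at x within {0..t})"
      using der[of x] x by (auto intro: has_vector_derivative_within_subset)
    have d2: "((\<lambda>x. crd b (f x)) has_vector_derivative crd b (L x (f x))) (at x within {0..t})"
      by (rule bounded_linear.has_vector_derivative[OF bounded_linear_crd d1])
    have d3: "((\<lambda>x. integral {0..x} d) has_real_derivative d x) (at x within {0..t})"
      using integral_has_real_derivative[OF cd x] .
    have d4: "((\<lambda>x. exp (- integral {0..x} d)) has_real_derivative (exp (- integral {0..x} d) * (- d x))) (at x within {0..t})"
      by (rule derivative_eq_intros d3 | simp)+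
    have "(g has_vector_derivative (crd b (f x) * of_real (exp (- integral {0..x} d) * (- d x)) + crd b (L x (f x)) * of_real (exp (- integral {0..x} d)))) (at x within {0..t})"
      unfolding g_def by (rule has_vector_derivative_mult[OF d2 has_vector_derivative_of_real[OF d4]])
    moreover have "crd b (f x) * of_real (exp (- integral {0..x} d) * (- d x)) + crd b (L x (f x)) * of_real (exp (- integral {0..x} d)) = 0"
      using coef[of x] x by (simp add: algebra_simps)
    ultimately show ?thesis by simp
  qed
  obtain c where c: "\<And>x. x \<in> {0..t} \<Longrightarrow> g x = c"
    using has_vector_derivative_zero_constant[of "{0..t}" g] dg by auto
  have "g t = g 0" using c t by auto
  then have "crd b (f t) * of_real (exp (- integral {0..t} d)) = crd b (f 0)"
    by (simp add: g_def)
  then have "crd b (f t) * of_real (exp (- integral {0..t} d)) * of_real (exp (integral {0..t} d)) = crd b (f 0) * of_real (exp (integral {0..t} d))"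
    by simp
  moreover have "of_real (exp (- integral {0..t} d)) * of_real (exp (integral {0..t} d)) = (1::complex)"
    by (simp flip: of_real_mult exp_add)
  ultimately show ?thesis by (simp add: mult.assoc)
qed



lemma nb: "at (t::real) within {0..} \<noteq> bot" if "0 \<le> t"
proof
  assume h: "at t within {0..} = bot"
  have "at t within {t<..} \<le> at t within {0..}" by (rule at_le) (use that in auto)
  then have "at_right t = bot" using h by (simp add: bot_unique)
  then show False by simp
qed

lemma crd_eqI: "(\<And>b. b \<le> 3 \<Longrightarrow> crd b A = crd b B) \<Longrightarrow> A = B"
proof -
  assume h: "\<And>b. b \<le> 3 \<Longrightarrow> crd b A = crd b B"
  have e: "crd 0 A = crd 0 B" "crd 1 A = crd 1 B" "crd 2 A = crd 2 B" "crd 3 A = crd 3 B"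
    using h by simp_all
  have "mkop (\<lambda>b. crd b A) = mkop (\<lambda>b. crd b B)"
    unfolding mkop_def by (simp only: e)
  then show ?thesis by (simp add: mkop_crd)
qed

lemma qform_add: "qform (A + B) x = qform A x + qform B x"
  by (simp add: qform_def sum2 algebra_simps)
lemma qform_scaleR: "qform (r *\<^sub>R A) x = of_real r * qform A x"
  by (simp add: qform_def sum2 vector_scaleR_component) (simp add: scaleR_conv_of_real algebra_simps)

lemma psd_add: "psd A \<Longrightarrow> psd B \<Longrightarrow> psd (A + B)"
  unfolding psd_def by (simp add: qform_add Reals_add)
lemma psd_scaleR: "psd A \<Longrightarrow> 0 \<le> r \<Longrightarrow> psd (r *\<^sub>R A)"
  unfolding psd_def by (simp add: qform_scaleR Reals_mult)

definition flipc :: "nat \<Rightarrow> real \<Rightarrow> qop \<Rightarrow> qop" where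
  "flipc k m A = mkop (\<lambda>b. if b = k then of_real m * crd b A else crd b A)"

definition yv :: "nat \<Rightarrow> complex^2 \<Rightarrow> complex^2" where
  "yv k x = (if k = 1 then (\<chi> i. if i = 0 then cnj (x$0) else - cnj (x$1))
     else if k = 2 then (\<chi> i. cnj (x$i)) else (\<chi> i. if i = 0 then cnj (x$1) else cnj (x$0)))"

lemma flip1: "flipc 1 (-1) A = (\<chi> i j. if i = j then A$i$j else - A$j$i)"
  by (simp add: qop_eq flipc_def mkop_def crd_def field_simps)
lemma flip2: "flipc 2 (-1) A = (\<chi> i j. A$j$i)"
  by (simp add: qop_eq flipc_def mkop_def crd_def field_simps)
lemma flip3: "flipc 3 (-1) A = (\<chi> i j. if i = j then A$(1-i)$(1-j) else A$i$j)"
  by (simp add: qop_eq flipc_def mkop_def crd_def field_simps)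

lemma qform_flip: "k \<in> {1,2,3} \<Longrightarrow> qform (flipc k (-1) A) x = qform A (yv k x)"
  apply (simp only: insert_iff empty_iff)
  apply (elim disjE)
  apply (simp_all only: flip1 flip2 flip3)
  apply (simp_all add: qform_def sum2 yv_def algebra_simps)
  done

lemma psd_flip: "k \<in> {1,2,3} \<Longrightarrow> psd A \<Longrightarrow> psd (flipc k (-1) A)"
  unfolding psd_def by (simp add: qform_flip)

lemma flip_decomp: "k \<in> {1,2,3} \<Longrightarrow> flipc k m A = ((1 + m)/2) *\<^sub>R A + ((1 - m)/2) *\<^sub>R flipc k (-1) A"
  by (rule crd_eqI) (auto simp: crd_add crd_scaleR flipc_def crd_mkop field_simps)

lemma psd_flipc: "k \<in> {1,2,3} \<Longrightarrow> psd A \<Longrightarrow> 0 \<le> m \<Longrightarrow> m \<le> 1 \<Longrightarrow> psd (flipc k m A)"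
  by (subst flip_decomp) (auto intro!: psd_add psd_scaleR psd_flip)



lemma psd_of_real: "(\<And>x. \<exists>r. 0 \<le> r \<and> qform A x = of_real r) \<Longrightarrow> psd A"
  unfolding psd_def by (metis Re_complex_of_real Reals_of_real)

lemma qform_mkop: "qform (mkop a) x = cnj (x$0) * (a 0 + a 3) * x$0 + cnj (x$0) * (a 1 - \<i> * a 2) * x$1
   + cnj (x$1) * (a 1 + \<i> * a 2) * x$0 + cnj (x$1) * (a 0 - a 3) * x$1"
  by (simp add: qform_def sum2 mkop_def)

lemma psd_axis1: "psd (mkop (\<lambda>b. if b = 0 then 1 else if b = 1 then 1 else 0))"
proof (rule psd_of_real)
  fix x :: "complex^2"
  have "qform (mkop (\<lambda>b. if b = 0 then 1 else if b = 1 then 1 else 0)) x = (x$0 + x$1) * cnj (x$0 + x$1)"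
    unfolding qform_mkop by (simp add: algebra_simps)
  also have "\<dots> = of_real ((cmod (x$0 + x$1))^2)" by (rule complex_norm_square[symmetric])
  finally show "\<exists>r. 0 \<le> r \<and> qform (mkop (\<lambda>b. if b = 0 then 1 else if b = 1 then 1 else 0)) x = of_real r"
    by (intro exI[of _ "(cmod (x$0 + x$1))^2"]) simp
qed

lemma psd_axis2: "psd (mkop (\<lambda>b. if b = 0 then 1 else if b = 2 then 1 else 0))"
proof (rule psd_of_real)
  fix x :: "complex^2"
  have "qform (mkop (\<lambda>b. if b = 0 then 1 else if b = 2 then 1 else 0)) x = (x$0 - \<i> * x$1) * cnj (x$0 - \<i> * x$1)"
    unfolding qform_mkop by (simp add: algebra_simps)
  also have "\<dots> = of_real ((cmod (x$0 - \<i> * x$1))^2)" by (rule complex_norm_square[symmetric])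
  finally show "\<exists>r. 0 \<le> r \<and> qform (mkop (\<lambda>b. if b = 0 then 1 else if b = 2 then 1 else 0)) x = of_real r"
    by (intro exI[of _ "(cmod (x$0 - \<i> * x$1))^2"]) simp
qed

lemma psd_axis3: "psd (mkop (\<lambda>b. if b = 0 then 1 else if b = 3 then 1 else 0))"
proof (rule psd_of_real)
  fix x :: "complex^2"
  have "qform (mkop (\<lambda>b. if b = 0 then 1 else if b = 3 then 1 else 0)) x = 2 * (x$0 * cnj (x$0))"
    unfolding qform_mkop by (simp add: algebra_simps)
  also have "\<dots> = of_real (2 * (cmod (x$0))^2)" by (simp only: of_real_mult complex_norm_square of_real_numeral)
  finally show "\<exists>r. 0 \<le> r \<and> qform (mkop (\<lambda>b. if b = 0 then 1 else if b = 3 then 1 else 0)) x = of_real r"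
    by (intro exI[of _ "2 * (cmod (x$0))^2"]) simp
qed

lemma psd_axis: "a \<in> {1,2,3} \<Longrightarrow> psd (mkop (\<lambda>b. if b = 0 then 1 else if b = a then 1 else 0))"
proof -
  assume a: "a \<in> {1,2,3}"
  then consider "a = 1" | "a = 2" | "a = 3" by blast
  then show ?thesis by cases (simp_all only: psd_axis1 psd_axis2 psd_axis3)
qed

lemma psd_Re: "psd A \<Longrightarrow> 0 \<le> Re (qform A x)"
  unfolding psd_def by blast

lemma psd_axis_ge1: "psd (mkop (\<lambda>b. if b = 0 then 1 else if b = 1 then of_real r else 0)) \<Longrightarrow> r \<le> 1"
proof -
  assume p: "psd (mkop (\<lambda>b. if b = 0 then 1 else if b = 1 then of_real r else 0))"
  obtain x :: "complex^2" where x: "x$0 = 1" "x$1 = -1"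
    using vec_lambda_beta[of "\<lambda>i::2. if i = 0 then (1) else (-1)"] by (metis zero_neq_one)
  have "Re (qform (mkop (\<lambda>b. if b = 0 then 1 else if b = 1 then of_real r else 0)) x) = 2 - 2 * r"
    unfolding qform_mkop by (simp add: x)
  then show ?thesis using psd_Re[OF p, of x] by linarith
qed

lemma psd_axis_ge2: "psd (mkop (\<lambda>b. if b = 0 then 1 else if b = 2 then of_real r else 0)) \<Longrightarrow> r \<le> 1"
proof -
  assume p: "psd (mkop (\<lambda>b. if b = 0 then 1 else if b = 2 then of_real r else 0))"
  obtain x :: "complex^2" where x: "x$0 = 1" "x$1 = - \<i>"
    using vec_lambda_beta[of "\<lambda>i::2. if i = 0 then (1) else (- \<i>)"] by (metis zero_neq_one)
  have "Re (qform (mkop (\<lambda>b. if b = 0 then 1 else if b = 2 then of_real r else 0)) x) = 2 - 2 * r"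
    unfolding qform_mkop by (simp add: x)
  then show ?thesis using psd_Re[OF p, of x] by linarith
qed

lemma psd_axis_ge3: "psd (mkop (\<lambda>b. if b = 0 then 1 else if b = 3 then of_real r else 0)) \<Longrightarrow> r \<le> 1"
proof -
  assume p: "psd (mkop (\<lambda>b. if b = 0 then 1 else if b = 3 then of_real r else 0))"
  obtain x :: "complex^2" where x: "x$0 = 0" "x$1 = 1"
    using vec_lambda_beta[of "\<lambda>i::2. if i = 0 then (0) else (1)"] by (metis zero_neq_one)
  have "Re (qform (mkop (\<lambda>b. if b = 0 then 1 else if b = 3 then of_real r else 0)) x) = 1 - r"
    unfolding qform_mkop by (simp add: x)
  then show ?thesis using psd_Re[OF p, of x] by linarith
qed

lemma psd_axis_ge: "a \<in> {1,2,3} \<Longrightarrow> psd (mkop (\<lambda>b. if b = 0 then 1 else if b = a then of_real r else 0)) \<Longrightarrow> r \<le> 1"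
proof -
  assume a: "a \<in> {1,2,3}" and p: "psd (mkop (\<lambda>b. if b = 0 then 1 else if b = a then of_real r else 0))"
  from a consider "a = 1" | "a = 2" | "a = 3" by blast
  then show ?thesis
  proof cases
    case 1 show ?thesis by (rule psd_axis_ge1) (use p 1 in \<open>simp only:\<close>)
  next
    case 2 show ?thesis by (rule psd_axis_ge2) (use p 2 in \<open>simp only:\<close>)
  next
    case 3 show ?thesis by (rule psd_axis_ge3) (use p 3 in \<open>simp only:\<close>)
  qed
qed


lemma has_integral_rev:
  fixes f :: "real \<Rightarrow> 'a::banach"
  assumes h: "(f has_integral I) {0..t}"
  shows "((\<lambda>s. f (t - s)) has_integral I) {0..t}"
proof -
  have "((\<lambda>x. f ((-1) *\<^sub>R x + t)) has_integral (1 / (\<bar>-1\<bar> ^ DIM(real))) *\<^sub>R I) ((\<lambda>x. (1 / (-1)) *\<^sub>R x + - ((1 / (-1)) *\<^sub>R t)) ` cbox 0 t)"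
    by (rule has_integral_affinity) (use h in auto)
  moreover have "(\<lambda>x. (1 / (-1)) *\<^sub>R x + - ((1 / (-1)) *\<^sub>R t)) ` cbox 0 t = {0..t}"
  proof -
    have "(\<lambda>x::real. (1 / (-1)) *\<^sub>R x + - ((1 / (-1)) *\<^sub>R t)) = (\<lambda>x. t - x)" by auto
    moreover have "(\<lambda>x. t - x) ` {0..t} = {0..t}"
      by (auto simp: image_iff intro!: bexI[where x="t - _"])
    ultimately show ?thesis by simp
  qed
  ultimately show ?thesis by (simp add: algebra_simps)
qed



lemma kernel_rel:
  fixes lam G kr g :: "real \<Rightarrow> real"
  assumes lam_dec: "\<And>x y. 0 \<le> x \<Longrightarrow> x \<le> y \<Longrightarrow> lam y \<le> lam x"
    and lam0: "lam 0 = 1"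
    and dlam: "\<And>x T. x \<in> {0..T} \<Longrightarrow> (lam has_real_derivative G x) (at x within {0..T})"
    and cG: "\<And>T. continuous_on {0..T} G"
    and kint: "\<And>t. 0 \<le> t \<Longrightarrow> kr integrable_on {0..t}"
    and conv: "\<And>t. 0 \<le> t \<Longrightarrow> ((\<lambda>\<tau>. lam \<tau> * kr (t - \<tau>)) has_integral g t) {0..t}"
    and t: "0 \<le> t"
  shows "integral {0..t} kr + integral {0..t} (\<lambda>s. G (t - s) * integral {0..s} kr) = g t"
proof -
  have "((\<lambda>s. lam (t - s) * kr (t - (t - s))) has_integral g t) {0..t}"
    using has_integral_rev[OF conv[OF t]] by simp
  then have c2: "((\<lambda>s. lam (t - s) * kr s) has_integral g t) {0..t}" by simp
  have dh: "((\<lambda>s. lam (t - s)) has_real_derivative - G (t - x)) (at x within {0..t})" if x: "x \<in> {0..t}" for x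
  proof -
    have img: "(\<lambda>s. t - s) ` {0..t} = {0..t}"
      by (auto simp: image_iff intro!: bexI[where x="t - _"])
    have "(lam has_real_derivative G (t - x)) (at (t - x) within ((\<lambda>s. t - s) ` {0..t}))"
      unfolding img using dlam[of "t - x" t] x by auto
    moreover have "((\<lambda>s. t - s) has_real_derivative -1) (at x within {0..t})"
      by (rule derivative_eq_intros | simp)+
    ultimately have "(lam \<circ> (\<lambda>s. t - s) has_real_derivative G (t - x) * -1) (at x within {0..t})"
      by (rule DERIV_image_chain)
    then show ?thesis by (simp add: o_def)
  qed
  have ch: "continuous_on {0..t} (\<lambda>s. - G (t - s))"
    using cont_refl[OF cG[of t], of t] t by (auto intro!: continuous_intros)
  have "(\<lambda>s. lam (t - s) * kr s) integrable_on {0..t} \<and>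
     integral {0..t} (\<lambda>s. lam (t - s) * kr s) = lam (t - t) * integral {0..t} kr - integral {0..t} (\<lambda>s. - G (t - s) * integral {0..s} kr)"
    by (rule ibp[OF kint[OF t] t _ dh ch]) (use lam_dec in auto)
  then have "g t = integral {0..t} kr - integral {0..t} (\<lambda>s. - (G (t - s) * integral {0..s} kr))"
    using c2 lam0 by (simp add: integral_unique)
  then show ?thesis by (simp add: integral_neg)
qed

lemma kernel_zero:
  fixes lam G kr :: "real \<Rightarrow> real"
  assumes lam_dec: "\<And>x y. 0 \<le> x \<Longrightarrow> x \<le> y \<Longrightarrow> lam y \<le> lam x"
    and lam0: "lam 0 = 1"
    and dlam: "\<And>x T. x \<in> {0..T} \<Longrightarrow> (lam has_real_derivative G x) (at x within {0..T})"
    and cG: "\<And>T. continuous_on {0..T} G"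
    and kint: "\<And>t. 0 \<le> t \<Longrightarrow> kr integrable_on {0..t}"
    and conv: "\<And>t. 0 \<le> t \<Longrightarrow> ((\<lambda>\<tau>. lam \<tau> * kr (t - \<tau>)) has_integral 0) {0..t}"
    and t: "0 \<le> t"
  shows "integral {0..t} kr = 0"
proof (rule volterra_zero[of t "\<lambda>x. integral {0..x} kr" G])
  show "continuous_on {0..t} (\<lambda>x. integral {0..x} kr)"
    by (rule indefinite_integral_continuous_1[OF kint[OF t]])
  show "continuous_on {0..t} G" by (rule cG)
  show "t \<in> {0..t}" using t by simp
  fix x assume "x \<in> {0..t}"
  then show "integral {0..x} kr + integral {0..x} (\<lambda>s. G (x - s) * integral {0..s} kr) = 0"
    using kernel_rel[of lam G kr "\<lambda>_. 0" x, OF lam_dec lam0 dlam cG kint conv] by auto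
qed

lemma kernel_sign:
  fixes lam G kr :: "real \<Rightarrow> real"
  assumes lam_dec: "\<And>x y. 0 \<le> x \<Longrightarrow> x \<le> y \<Longrightarrow> lam y \<le> lam x"
    and lam0: "lam 0 = 1"
    and dlam: "\<And>x T. x \<in> {0..T} \<Longrightarrow> (lam has_real_derivative G x) (at x within {0..T})"
    and cG: "\<And>T. continuous_on {0..T} G"
    and Gnp: "\<And>x. 0 \<le> x \<Longrightarrow> G x \<le> 0"
    and kint: "\<And>t. 0 \<le> t \<Longrightarrow> kr integrable_on {0..t}"
    and conv: "\<And>t. 0 \<le> t \<Longrightarrow> ((\<lambda>\<tau>. lam \<tau> * kr (t - \<tau>)) has_integral G t) {0..t}"
    and t: "0 \<le> t"
  shows "integral {0..t} kr \<le> 0"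
proof -
  have "0 \<le> - integral {0..t} kr"
  proof (rule volterra_sign[of t "\<lambda>x. - integral {0..x} kr" "\<lambda>x. - G x"])
    show "continuous_on {0..t} (\<lambda>x. - integral {0..x} kr)"
      by (intro continuous_intros indefinite_integral_continuous_1[OF kint[OF t]])
    show "continuous_on {0..t} (\<lambda>x. - G x)" by (intro continuous_intros cG)
    show "t \<in> {0..t}" using t by simp
    fix x assume x: "x \<in> {0..t}"
    then show "0 \<le> - G x" using Gnp by auto
    have "integral {0..x} kr + integral {0..x} (\<lambda>s. G (x - s) * integral {0..s} kr) = G x"
      using kernel_rel[of lam G kr G x, OF lam_dec lam0 dlam cG kint conv] x by auto
    then show "- integral {0..x} kr = - G x + integral {0..x} (\<lambda>s. - G (x - s) * - integral {0..s} kr)"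
      by simp
  qed
  then show ?thesis by simp
qed

theorem corollary3:
  fixes \<gamma> :: "nat \<Rightarrow> real \<Rightarrow> real"
    and \<Lambda> \<Lambda>Red K :: "real \<Rightarrow> qmap"
  assumes rates_cont: "\<forall>k\<in>{1,2,3}. continuous_on {0..} (\<gamma> k)"
    and \<Lambda>_init: "\<Lambda> 0 = id"
    and TCL: "\<forall>\<rho> t. 0 \<le> t \<longrightarrow>
        ((\<lambda>s. \<Lambda> s \<rho>) has_vector_derivative LTCL \<gamma> t (\<Lambda> t \<rho>)) (at t within {0..})"
    and K_lin: "\<forall>\<tau>. 0 \<le> \<tau> \<longrightarrow> qlinear (K \<tau>)"
    and K_int: "\<forall>\<rho> t. 0 \<le> t \<longrightarrow> (\<lambda>\<tau>. K \<tau> \<rho>) integrable_on {0..t}"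
    and NZ: "\<forall>\<rho> t. 0 \<le> t \<longrightarrow>
        (\<lambda>\<tau>. K (t - \<tau>) (\<Lambda> \<tau> \<rho>)) integrable_on {0..t} \<and>
        ((\<lambda>s. \<Lambda> s \<rho>) has_vector_derivative
            integral {0..t} (\<lambda>\<tau>. K (t - \<tau>) (\<Lambda> \<tau> \<rho>))) (at t within {0..})"
    and Laplace: "\<forall>\<alpha>\<in>{0,1,2,3}. \<forall>u>0.
        (\<lambda>t. exp (- u * t) * Gfun \<gamma> \<alpha> t) integrable_on {0..} \<and>
        \<bar>laplace (Gfun \<gamma> \<alpha>) u\<bar> < 1"
    and Red_init: "\<Lambda>Red 0 = id"
    and Red_eq: "\<forall>\<rho> t. 0 \<le> t \<longrightarrow>
        ((\<lambda>s. \<Lambda>Red s \<rho>) has_vector_derivative KRed K t (\<Lambda>Red t \<rho>)) (at t within {0..})"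
    and Pdiv: "P_divisible \<Lambda>"
  shows "P_divisible \<Lambda>Red"
proof -
  have cg: "continuous_on {0..T} (\<gamma> k)" if "k \<in> {1,2,3}" for k T
    using rates_cont that by (auto intro: continuous_on_subset)
  have cm: "continuous_on {0..T} (mTCL \<gamma> b)" for b T
  proof -
    have "mTCL \<gamma> b = (if b = 1 then (\<lambda>t. - (\<gamma> 2 t + \<gamma> 3 t)) else if b = 2 then (\<lambda>t. - (\<gamma> 1 t + \<gamma> 3 t))
       else if b = 3 then (\<lambda>t. - (\<gamma> 1 t + \<gamma> 2 t)) else (\<lambda>t. 0))"
      by (auto simp: mTCL_def fun_eq_iff)
    then show ?thesis by (auto intro!: continuous_intros cg)
  qed
  define lam where "lam b t = exp (integral {0..t} (mTCL \<gamma> b))" for b t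
  have lam_pos: "0 < lam b t" for b t by (simp add: lam_def)
  have m0: "mTCL \<gamma> 0 = (\<lambda>_. 0)" by (simp add: fun_eq_iff mTCL_def)
  have lam0: "lam 0 t = 1" for t by (simp add: lam_def m0)
  have lam_at0: "lam b 0 = 1" for b by (simp add: lam_def)
  have Lcrd: "crd b (\<Lambda> t \<rho>) = crd b \<rho> * of_real (lam b t)" if "0 \<le> t" "b \<le> 3" for b t \<rho>
  proof -
    have "crd b (\<Lambda> t \<rho>) = crd b (\<Lambda> 0 \<rho>) * of_real (exp (integral {0..t} (mTCL \<gamma> b)))"
      by (rule ode_coord[where f="\<lambda>s. \<Lambda> s \<rho>" and L="LTCL \<gamma>" and d="mTCL \<gamma> b"])
         (use TCL crd_LTCL[OF \<open>b \<le> 3\<close>] cm that in auto)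
    then show ?thesis using \<Lambda>_init by (simp add: lam_def)
  qed
  have lam_dec: "lam a t \<le> lam a s" if "a \<le> 3" "0 \<le> s" "s \<le> t" for a s t
  proof (cases "a = 0")
    case True then show ?thesis by (simp add: lam0)
  next
    case False
    then have a: "a \<in> {1,2,3}" using \<open>a \<le> 3\<close> by auto
    define \<rho> where "\<rho> = mkop (\<lambda>b. if b = 0 then 1 else if b = a then of_real (1 / lam a s) else 0)"
    have ls: "of_real (1 / lam a s) * of_real (lam a s) = (1::complex)"
      using lam_pos[of a s] by (simp flip: of_real_mult)
    have \<rho>s: "\<Lambda> s \<rho> = mkop (\<lambda>b. if b = 0 then 1 else if b = a then 1 else 0)"
    proof (rule crd_eqI)
      fix b :: nat assume b: "b \<le> 3"
      show "crd b (\<Lambda> s \<rho>) = crd b (mkop (\<lambda>b. if b = 0 then 1 else if b = a then 1 else 0))"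
        using b that False ls by (simp add: Lcrd \<rho>_def crd_mkop lam0)
    qed
    have \<rho>t: "\<Lambda> t \<rho> = mkop (\<lambda>b. if b = 0 then 1 else if b = a then of_real (lam a t / lam a s) else 0)"
    proof (rule crd_eqI)
      fix b :: nat assume b: "b \<le> 3"
      show "crd b (\<Lambda> t \<rho>) = crd b (mkop (\<lambda>b. if b = 0 then 1 else if b = a then of_real (lam a t / lam a s) else 0))"
        using b that False by (simp add: Lcrd \<rho>_def crd_mkop lam0 flip: of_real_mult)
    qed
    have "\<exists>V. qlinear V \<and> positive_map V \<and> trace_preserving V \<and> \<Lambda> t = V \<circ> \<Lambda> s"
      by (rule Pdiv[unfolded P_divisible_def, rule_format, of s t]) (use that in simp)
    then obtain V where V: "positive_map V" "\<Lambda> t = V \<circ> \<Lambda> s" by blast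
    have "psd (V (\<Lambda> s \<rho>))" using V(1) psd_axis[OF a] \<rho>s unfolding positive_map_def by simp
    then have "psd (\<Lambda> t \<rho>)" using V(2) by simp
    then have "psd (mkop (\<lambda>b. if b = 0 then 1 else if b = a then of_real (lam a t / lam a s) else 0))"
      using \<rho>t by simp
    then have "lam a t / lam a s \<le> 1" by (rule psd_axis_ge[OF a])
    then show ?thesis using lam_pos[of a s] by (simp add: divide_le_eq)
  qed
  define G where "G b t = mTCL \<gamma> b t * lam b t" for b t
  have dlam: "(lam b has_real_derivative G b x) (at x within {0..T})" if "x \<in> {0..T}" for b x T
  proof -
    have d3: "((\<lambda>t. integral {0..t} (mTCL \<gamma> b)) has_real_derivative mTCL \<gamma> b x) (at x within {0..T})"
      by (rule integral_has_real_derivative[OF cm that])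
    have "((\<lambda>t. exp (integral {0..t} (mTCL \<gamma> b))) has_real_derivative exp (integral {0..x} (mTCL \<gamma> b)) * mTCL \<gamma> b x) (at x within {0..T})"
      by (rule derivative_eq_intros d3 | simp)+
    moreover have "lam b = (\<lambda>t. exp (integral {0..t} (mTCL \<gamma> b)))" by (simp add: fun_eq_iff lam_def)
    ultimately show ?thesis by (simp add: lam_def G_def mult.commute)
  qed
  have clam: "continuous_on {0..T} (lam b)" for b T
    using dlam by (meson DERIV_continuous continuous_at_imp_continuous_on continuous_on_eq_continuous_within)
  have cG: "continuous_on {0..T} (G b)" for b T
    unfolding G_def by (intro continuous_intros cm clam)
  have G0: "G 0 t = 0" for t by (simp add: G_def mTCL_def)
  have Gnp: "G a t \<le> 0" if "a \<le> 3" "0 \<le> t" for a t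
  proof -
    have d: "(lam a has_real_derivative G a t) (at t within {t..t+1})"
      using dlam[of t "t+1" a] that by (auto intro: DERIV_subset)
    have "at t within {t..t+1} = at_right t" by (rule at_within_Icc_at_right) simp
    then have lim: "((\<lambda>y. (lam a y - lam a t) / (y - t)) \<longlongrightarrow> G a t) (at_right t)"
      using d by (simp add: has_field_derivative_iff)
    have ev: "\<forall>\<^sub>F y in at_right t. (lam a y - lam a t) / (y - t) \<le> 0"
      using eventually_at_right_less[of t]
    proof (rule eventually_mono)
      fix y assume "t < y"
      then have "lam a y \<le> lam a t" using lam_dec[of a t y] that by auto
      then show "(lam a y - lam a t) / (y - t) \<le> 0" using \<open>t < y\<close> by (simp add: divide_nonpos_pos)
    qed
    show ?thesis using tendsto_upperbound[OF lim ev] by simp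
  qed
  have Lsig: "\<Lambda> \<tau> (pauli a) = lam a \<tau> *\<^sub>R pauli a" if "0 \<le> \<tau>" "a \<le> 3" for \<tau> a
    by (rule crd_eqI) (use that in \<open>auto simp: Lcrd crd_scaleR crd_pauli\<close>)
  have scaleR_cscale: "r *\<^sub>R A = cscale (of_real r) A" for r and A :: qop
    by (simp add: qop_eq cscale_def vector_scaleR_component) (simp add: scaleR_conv_of_real)
  have Kadd: "K \<tau> (A + B) = K \<tau> A + K \<tau> B" if "0 \<le> \<tau>" for \<tau> A B
    using K_lin that unfolding qlinear_def by blast
  have Kcs: "K \<tau> (cscale c A) = cscale c (K \<tau> A)" if "0 \<le> \<tau>" for \<tau> c A
    using K_lin that unfolding qlinear_def by blast
  have qlin_scale: "K \<tau> (r *\<^sub>R A) = r *\<^sub>R K \<tau> A" if "0 \<le> \<tau>" for \<tau> r A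
    using Kcs[OF that] by (simp add: scaleR_cscale)
  define kc where "kc a b \<tau> = crd b (K \<tau> (pauli a))" for a b \<tau>
  have kcf: "kc a b = (\<lambda>\<tau>. crd b (K \<tau> (pauli a)))" for a b by (simp add: fun_eq_iff kc_def)
  have kc_int: "kc a b integrable_on {0..t}" if "0 \<le> t" for a b t
  proof -
    have "(\<lambda>\<tau>. K \<tau> (pauli a)) integrable_on {0..t}" using K_int that by blast
    from integrable_linear[OF this bounded_linear_crd[of b]] show ?thesis by (simp add: kcf o_def)
  qed
  have conv: "((\<lambda>\<tau>. of_real (lam a \<tau>) * kc a b (t - \<tau>)) has_integral of_real (if b = a then G a t else 0)) {0..t}"
    if ab: "a \<le> 3" "b \<le> 3" "0 \<le> t" for a b t
  proof -
    have nz: "(\<lambda>\<tau>. K (t - \<tau>) (\<Lambda> \<tau> (pauli a))) integrable_on {0..t}" and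
      d1: "((\<lambda>s. \<Lambda> s (pauli a)) has_vector_derivative integral {0..t} (\<lambda>\<tau>. K (t - \<tau>) (\<Lambda> \<tau> (pauli a)))) (at t within {0..})"
      using NZ ab by blast+
    have d2: "((\<lambda>s. \<Lambda> s (pauli a)) has_vector_derivative LTCL \<gamma> t (\<Lambda> t (pauli a))) (at t within {0..})"
      using TCL ab by blast
    have eqI: "integral {0..t} (\<lambda>\<tau>. K (t - \<tau>) (\<Lambda> \<tau> (pauli a))) = LTCL \<gamma> t (\<Lambda> t (pauli a))"
      by (rule vector_derivative_unique_within[OF nb[OF \<open>0 \<le> t\<close>] d1 d2])
    have hi: "((\<lambda>\<tau>. crd b (K (t - \<tau>) (\<Lambda> \<tau> (pauli a)))) has_integral crd b (LTCL \<gamma> t (\<Lambda> t (pauli a)))) {0..t}"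
      using has_integral_linear[OF integrable_integral[OF nz] bounded_linear_crd[of b]] eqI by (simp add: o_def)
    have pt: "crd b (K (t - \<tau>) (\<Lambda> \<tau> (pauli a))) = of_real (lam a \<tau>) * kc a b (t - \<tau>)" if "\<tau> \<in> {0..t}" for \<tau>
      using that ab by (simp add: Lsig qlin_scale crd_scaleR kc_def)
    have rhs: "crd b (LTCL \<gamma> t (\<Lambda> t (pauli a))) = of_real (if b = a then G a t else 0)"
      using ab by (simp add: crd_LTCL Lsig crd_scaleR crd_pauli G_def)
    show ?thesis using has_integral_eq[OF pt hi] rhs by simp
  qed
  have lamdec': "lam a y \<le> lam a x" if "a \<le> 3" "0 \<le> x" "x \<le> y" for a x y
    using lam_dec that by blast
  have kRe_int: "(\<lambda>\<tau>. Re (kc a b \<tau>)) integrable_on {0..t}" if "0 \<le> t" for a b t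
    using integrable_linear[OF kc_int[OF that] bounded_linear_Re] by (simp add: o_def)
  have kIm_int: "(\<lambda>\<tau>. Im (kc a b \<tau>)) integrable_on {0..t}" if "0 \<le> t" for a b t
    using integrable_linear[OF kc_int[OF that] bounded_linear_Im] by (simp add: o_def)
  have convRe: "((\<lambda>\<tau>. lam a \<tau> * Re (kc a b (t - \<tau>))) has_integral (if b = a then G a t else 0)) {0..t}"
    if "a \<le> 3" "b \<le> 3" "0 \<le> t" for a b t
    using has_integral_linear[OF conv[OF that] bounded_linear_Re] by (simp add: o_def)
  have convIm: "((\<lambda>\<tau>. lam a \<tau> * Im (kc a b (t - \<tau>))) has_integral 0) {0..t}"
    if "a \<le> 3" "b \<le> 3" "0 \<le> t" for a b t
    using has_integral_linear[OF conv[OF that] bounded_linear_Im] by (simp add: o_def)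
  have kIm: "integral {0..t} (\<lambda>\<tau>. Im (kc a b \<tau>)) = 0" if "a \<le> 3" "b \<le> 3" "0 \<le> t" for a b t
    by (rule kernel_zero[where lam="lam a" and G="G a"])
       (use that lamdec' lam_at0 dlam cG kIm_int convIm in auto)
  have kRe0: "integral {0..t} (\<lambda>\<tau>. Re (kc a b \<tau>)) = 0" if "a \<le> 3" "b \<le> 3" "0 \<le> t" "b \<noteq> a \<or> a = 0" for a b t
  proof (rule kernel_zero[where lam="lam a" and G="G a"])
    fix t' :: real assume "0 \<le> t'"
    then show "((\<lambda>\<tau>. lam a \<tau> * Re (kc a b (t' - \<tau>))) has_integral 0) {0..t'}"
      using convRe[of a b t'] that by (cases "b = a") (simp_all add: G0)
  qed (use that lamdec' lam_at0 dlam cG kRe_int in auto)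
  define \<kappa> where "\<kappa> b t = integral {0..t} (\<lambda>\<tau>. Re (kc b b \<tau>))" for b t
  have \<kappa>np: "\<kappa> a t \<le> 0" if "a \<le> 3" "0 \<le> t" for a t
    unfolding \<kappa>_def
  proof (rule kernel_sign[where lam="lam a" and G="G a"])
    fix t' :: real assume "0 \<le> t'"
    then show "((\<lambda>\<tau>. lam a \<tau> * Re (kc a a (t' - \<tau>))) has_integral G a t') {0..t'}"
      using convRe[of a a t'] that by simp
  qed (use that lamdec' lam_at0 dlam cG kRe_int Gnp in auto)
  have \<kappa>0: "\<kappa> 0 t = 0" if "0 \<le> t" for t
    unfolding \<kappa>_def using kRe0[of 0 0 t] that by simp
  have kc_integral: "integral {0..t} (kc a b) = of_real (if b = a then \<kappa> a t else 0)"
    if "a \<le> 3" "b \<le> 3" "0 \<le> t" for a b t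
  proof (rule complex_eqI)
    have "Re (integral {0..t} (kc a b)) = integral {0..t} (\<lambda>\<tau>. Re (kc a b \<tau>))"
      using integral_linear[OF kc_int[OF \<open>0 \<le> t\<close>] bounded_linear_Re] by (simp add: o_def)
    then show "Re (integral {0..t} (kc a b)) = Re (of_real (if b = a then \<kappa> a t else 0))"
      using kRe0[of a b t] that by (auto simp: \<kappa>_def)
    have "Im (integral {0..t} (kc a b)) = integral {0..t} (\<lambda>\<tau>. Im (kc a b \<tau>))"
      using integral_linear[OF kc_int[OF \<open>0 \<le> t\<close>] bounded_linear_Im] by (simp add: o_def)
    then show "Im (integral {0..t} (kc a b)) = Im (of_real (if b = a then \<kappa> a t else 0))"
      using kIm[of a b t] that by auto
  qed
  have decomp: "\<rho> = cscale (crd 0 \<rho>) (pauli 0) + cscale (crd 1 \<rho>) (pauli 1) + cscale (crd 2 \<rho>) (pauli 2) + cscale (crd 3 \<rho>) (pauli 3)" for \<rho>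
    by (rule crd_eqI) (auto simp: crd_add crd_cscale crd_pauli eval_nat_numeral le_Suc_eq)
  have Kexp: "crd b (K \<tau> \<rho>) = crd 0 \<rho> * kc 0 b \<tau> + crd 1 \<rho> * kc 1 b \<tau> + crd 2 \<rho> * kc 2 b \<tau> + crd 3 \<rho> * kc 3 b \<tau>"
    if "0 \<le> \<tau>" for b \<tau> \<rho>
  proof -
    have "K \<tau> \<rho> = K \<tau> (cscale (crd 0 \<rho>) (pauli 0) + cscale (crd 1 \<rho>) (pauli 1) + cscale (crd 2 \<rho>) (pauli 2) + cscale (crd 3 \<rho>) (pauli 3))"
      using decomp[of \<rho>] by (rule arg_cong)
    then show ?thesis using that by (simp add: Kadd Kcs crd_add crd_cscale kc_def)
  qed
  have Rcrd: "crd b (KRed K t \<rho>) = of_real (\<kappa> b t) * crd b \<rho>" if "0 \<le> t" "b \<le> 3" for b t \<rho>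
  proof -
    have "(\<lambda>\<tau>. K \<tau> \<rho>) integrable_on {0..t}" using K_int that by blast
    then have "integral {0..t} (crd b \<circ> (\<lambda>\<tau>. K \<tau> \<rho>)) = crd b (integral {0..t} (\<lambda>\<tau>. K \<tau> \<rho>))"
      by (rule integral_linear[OF _ bounded_linear_crd])
    then have "crd b (KRed K t \<rho>) = integral {0..t} (\<lambda>\<tau>. crd b (K \<tau> \<rho>))"
      unfolding KRed_def o_def by simp
    also have "\<dots> = integral {0..t} (\<lambda>\<tau>. crd 0 \<rho> * kc 0 b \<tau> + crd 1 \<rho> * kc 1 b \<tau> + crd 2 \<rho> * kc 2 b \<tau> + crd 3 \<rho> * kc 3 b \<tau>)"
      by (rule Henstock_Kurzweil_Integration.integral_cong) (simp add: Kexp)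
    also have "\<dots> = crd 0 \<rho> * integral {0..t} (kc 0 b) + crd 1 \<rho> * integral {0..t} (kc 1 b) + crd 2 \<rho> * integral {0..t} (kc 2 b) + crd 3 \<rho> * integral {0..t} (kc 3 b)"
      by (intro integral_unique has_integral_add has_integral_mult_right integrable_integral kc_int that)
    also have "\<dots> = of_real (\<kappa> b t) * crd b \<rho>"
      using that by (auto simp: kc_integral eval_nat_numeral le_Suc_eq)
    finally show ?thesis .
  qed
  have c\<kappa>: "continuous_on {0..T} (\<kappa> b)" for b T
  proof (cases "0 \<le> T")
    case True
    then show ?thesis unfolding \<kappa>_def by (rule indefinite_integral_continuous_1[OF kRe_int])
  next
    case False
    then have "{0..T} = {}" by auto
    then show ?thesis by simp
  qed
  define ell where "ell b t = exp (integral {0..t} (\<kappa> b))" for b t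
  have ell_pos: "0 < ell b t" for b t by (simp add: ell_def)
  have Redcrd: "crd b (\<Lambda>Red t \<rho>) = crd b \<rho> * of_real (ell b t)" if "0 \<le> t" "b \<le> 3" for b t \<rho>
  proof -
    have "crd b (\<Lambda>Red t \<rho>) = crd b (\<Lambda>Red 0 \<rho>) * of_real (exp (integral {0..t} (\<kappa> b)))"
      by (rule ode_coord[where f="\<lambda>s. \<Lambda>Red s \<rho>" and L="KRed K" and d="\<kappa> b"])
         (use Red_eq Rcrd[OF _ \<open>b \<le> 3\<close>] c\<kappa> that in auto)
    then show ?thesis using Red_init by (simp add: ell_def)
  qed
  have ell_dec: "ell b t \<le> ell b s" if "b \<le> 3" "0 \<le> s" "s \<le> t" for b s t
  proof -
    have ci: "\<kappa> b integrable_on {0..t}"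
      by (rule integrable_continuous_real[OF c\<kappa>])
    have "integral {0..s} (\<kappa> b) + integral {s..t} (\<kappa> b) = integral {0..t} (\<kappa> b)"
      using that by (intro Henstock_Kurzweil_Integration.integral_combine ci) auto
    moreover have "integral {s..t} (\<kappa> b) \<le> integral {s..t} (\<lambda>_. 0::real)"
      by (rule integral_le) (use that integrable_subinterval_real[OF ci, of s t] \<kappa>np in auto)
    ultimately have "integral {0..t} (\<kappa> b) \<le> integral {0..s} (\<kappa> b)" by simp
    then show ?thesis by (simp add: ell_def)
  qed
  have ell0: "ell 0 t = 1" if "0 \<le> t" for t
  proof -
    have "integral {0..t} (\<kappa> 0) = integral {0..t} (\<lambda>_. 0::real)"
      by (rule Henstock_Kurzweil_Integration.integral_cong) (simp add: \<kappa>0)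
    then show ?thesis by (simp add: ell_def)
  qed
  have crd_flipc: "crd b (flipc k m A) = (if b = k then of_real m * crd b A else crd b A)" if "b \<le> 3" for b k m A
    using that by (simp add: flipc_def crd_mkop)
  have qtr: "qtrace A = 2 * crd 0 A" for A
    by (simp add: qtrace_def sum2 crd_def)
  show ?thesis
    unfolding P_divisible_def
  proof (intro allI impI)
    fix t s :: real assume st: "0 \<le> s \<and> s \<le> t"
    define \<mu> where "\<mu> b = ell b t / ell b s" for b
    have \<mu>01: "0 \<le> \<mu> b" "\<mu> b \<le> 1" if "b \<le> 3" for b
      using ell_dec[of b s t] ell_pos[of b s] ell_pos[of b t] st that by (auto simp: \<mu>_def divide_le_eq)
    define V where "V A = flipc 1 (\<mu> 1) (flipc 2 (\<mu> 2) (flipc 3 (\<mu> 3) A))" for A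
    have crdV: "crd b (V A) = (if b = 0 then 1 else of_real (\<mu> b)) * crd b A" if "b \<le> 3" for b A
      using that by (auto simp: V_def crd_flipc eval_nat_numeral le_Suc_eq)
    have "qlinear V"
      unfolding qlinear_def
      by (intro conjI allI; rule crd_eqI) (simp_all add: crdV crd_add crd_cscale algebra_simps)
    moreover have "positive_map V"
      unfolding positive_map_def V_def
      by (intro allI impI psd_flipc \<mu>01) auto
    moreover have "trace_preserving V"
      unfolding trace_preserving_def by (simp add: qtr crdV)
    moreover have "\<Lambda>Red t = V \<circ> \<Lambda>Red s"
    proof
      fix \<rho>
      show "\<Lambda>Red t \<rho> = (V \<circ> \<Lambda>Red s) \<rho>"
      proof (rule crd_eqI)
        fix b :: nat assume b: "b \<le> 3"
        have er: "\<mu> b * ell b s = ell b t" using ell_pos[of b s] by (simp add: \<mu>_def)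
        have es: "of_real (\<mu> b) * of_real (ell b s) = (of_real (ell b t) :: complex)"
          by (simp only: of_real_mult[symmetric] er)
        show "crd b (\<Lambda>Red t \<rho>) = crd b ((V \<circ> \<Lambda>Red s) \<rho>)"
          using b st es by (auto simp: crdV Redcrd ell0)
      qed
    qed
    ultimately show "\<exists>V. qlinear V \<and> positive_map V \<and> trace_preserving V \<and> \<Lambda>Red t = V \<circ> \<Lambda>Red s"
      by blast
  qed
qed


end
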